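(* Let $(\mathbb X,S)$ be a minimal subshift over a finite alphabet $\mathcal A$ satisfying the Boshernitzan condition, and let $m\in\mathbb N$. Then each $S^m$-minimal component $\mathbb X_j$ of $\mathbb X$, viewed via the conjugacy $x\mapsto (x_{[km,(k+1)m-1]})_{k\in\mathbb Z}$ as a subshift (with the left shift, corresponding to $S^m$) over the alphabet $\mathcal L_m(\mathbb X)$, satisfies the Boshernitzan condition.
   Context: $\mathcal L_m(\mathbb X)$ is the set of words of length $m$ occurring in elements of $\mathbb X$, and $x_{[j,k]}=x_j\cdots x_k$. An $S^m$-minimal component is a nonempty closed $S^m$-invariant subset minimal with these properties. Boshernitzan condition for a minimal subshift $\mathbb Y$: there is a shift-invariant probability measure $\nu$ with $\limsup_{n}n\min\{\nu[u]:u\in\mathcal L_n(\mathbb Y)\}>0$, where $[u]$ is the cylinder set of $u$ at position $0$. *)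

theory Defs
  imports "HOL-Probability.Probability"
begin

definition shift :: "(int \<Rightarrow> 'b) \<Rightarrow> (int \<Rightarrow> 'b)" where
  "shift x = (\<lambda>i. x (i + 1))"

definition full_shift_top :: "'b set \<Rightarrow> (int \<Rightarrow> 'b) topology" where
  "full_shift_top A = product_topology (\<lambda>_. discrete_topology A) UNIV"

definition borel_of_top :: "'c topology \<Rightarrow> 'c measure" where
  "borel_of_top T = sigma (topspace T) {U. openin T U}"

definition closed_invariant :: "'b set \<Rightarrow> ((int \<Rightarrow> 'b) \<Rightarrow> (int \<Rightarrow> 'b)) \<Rightarrow> (int \<Rightarrow> 'b) set \<Rightarrow> bool" where
  "closed_invariant A f Z \<longleftrightarrow> closedin (full_shift_top A) Z \<and> f ` Z = Z"

definition subshift :: "'b set \<Rightarrow> (int \<Rightarrow> 'b) set \<Rightarrow> bool" where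
  "subshift A X \<longleftrightarrow> finite A \<and> closed_invariant A shift X"

definition minimal_component :: "'b set \<Rightarrow> ((int \<Rightarrow> 'b) \<Rightarrow> (int \<Rightarrow> 'b)) \<Rightarrow> (int \<Rightarrow> 'b) set \<Rightarrow> (int \<Rightarrow> 'b) set \<Rightarrow> bool" where
  "minimal_component A f X Z \<longleftrightarrow> Z \<subseteq> X \<and> Z \<noteq> {} \<and> closed_invariant A f Z \<and>
     (\<forall>W. W \<subseteq> Z \<and> W \<noteq> {} \<and> closed_invariant A f W \<longrightarrow> W = Z)"

definition minimal_subshift :: "'b set \<Rightarrow> (int \<Rightarrow> 'b) set \<Rightarrow> bool" where
  "minimal_subshift A X \<longleftrightarrow> subshift A X \<and> minimal_component A shift X X"

definition word_at :: "(int \<Rightarrow> 'b) \<Rightarrow> int \<Rightarrow> nat \<Rightarrow> 'b list" where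
  "word_at x j n = map (\<lambda>i. x (j + int i)) [0..<n]"

definition lang :: "nat \<Rightarrow> (int \<Rightarrow> 'b) set \<Rightarrow> 'b list set" where
  "lang n X = {word_at x j n | x j. x \<in> X}"

definition cylinder :: "'b list \<Rightarrow> (int \<Rightarrow> 'b) set" where
  "cylinder u = {x. \<forall>i < length u. x (int i) = u ! i}"

definition invariant_prob :: "'b set \<Rightarrow> (int \<Rightarrow> 'b) set \<Rightarrow> (int \<Rightarrow> 'b) measure \<Rightarrow> bool" where
  "invariant_prob A Y \<nu> \<longleftrightarrow> prob_space \<nu> \<and>
     space \<nu> = Y \<and>
     sets \<nu> = sets (borel_of_top (subtopology (full_shift_top A) Y)) \<and>
     (\<forall>B \<in> sets \<nu>. emeasure \<nu> (shift -` B \<inter> Y) = emeasure \<nu> B)"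

definition boshernitzan :: "'b set \<Rightarrow> (int \<Rightarrow> 'b) set \<Rightarrow> bool" where
  "boshernitzan A Y \<longleftrightarrow> (\<exists>\<nu>. invariant_prob A Y \<nu> \<and>
     limsup (\<lambda>n::nat. ereal (real n * Min {measure \<nu> (cylinder u \<inter> Y) | u. u \<in> lang n Y})) > 0)"

definition block_code :: "nat \<Rightarrow> (int \<Rightarrow> 'b) \<Rightarrow> (int \<Rightarrow> 'b list)" where
  "block_code m x = (\<lambda>k. word_at x (k * int m) m)"

end

theory Submission
  imports Defs
begin


definition shz :: "int \<Rightarrow> (int \<Rightarrow> 'b) \<Rightarrow> (int \<Rightarrow> 'b)" where
  "shz t x = (\<lambda>i. x (i + t))"

lemma shz_apply[simp]: "shz t x i = x (i + t)" by (simp add: shz_def)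
lemma shz_shz[simp]: "shz a (shz b x) = shz (a + b) x"
  by (simp add: shz_def fun_eq_iff ac_simps)
lemma shz_0[simp]: "shz 0 x = x" by (simp add: shz_def)
lemma shift_eq: "shift = shz 1" by (simp add: fun_eq_iff shift_def shz_def)
lemma funpow_shift: "(shift ^^ n) = shz (int n)"
proof (induction n)
  case 0 then show ?case by (simp add: fun_eq_iff)
next
  case (Suc n) then show ?case by (simp add: fun_eq_iff shift_eq add_ac)
qed

lemma topspace_fs: "topspace (full_shift_top A) = {x. \<forall>i. x i \<in> A}"
  by (auto simp: full_shift_top_def PiE_UNIV_domain)

lemma cont_shz: "continuous_map (full_shift_top A) (full_shift_top A) (shz t)"
  unfolding full_shift_top_def continuous_map_componentwise_UNIV
  by (auto simp: shz_def intro!: continuous_map_product_projection)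

lemma basic_open:
  assumes "finite F"
  shows "openin (full_shift_top A) {y \<in> topspace (full_shift_top A). \<forall>i\<in>F. y i = g i}"
proof -
  have eq: "{y \<in> topspace (full_shift_top A). \<forall>i\<in>F. y i = g i}
      = PiE UNIV (\<lambda>i. if i \<in> F then {g i} \<inter> A else A)"
    by (auto simp: topspace_fs PiE_UNIV_domain Pi_iff split: if_splits) (metis IntE)
  have "{i. (if i \<in> F then {g i} \<inter> A else A) \<noteq> A} \<subseteq> F" by auto
  then have "finite {i. (if i \<in> F then {g i} \<inter> A else A) \<noteq> A}"
    using assms finite_subset by blast
  then show ?thesis unfolding eq unfolding full_shift_top_def
    by (subst openin_PiE_gen) auto
qed

lemma locality:
  assumes "openin (full_shift_top A) S" "x \<in> S"
  shows "\<exists>K::nat. \<forall>y \<in> topspace (full_shift_top A). (\<forall>i. \<bar>i\<bar> \<le> int K \<longrightarrow> y i = x i) \<longrightarrow> y \<in> S"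
proof -
  obtain U where U: "finite {i. U i \<noteq> A}" "\<forall>i. openin (discrete_topology A) (U i)"
     "x \<in> PiE UNIV U" "PiE UNIV U \<subseteq> S"
    using assms unfolding full_shift_top_def openin_product_topology_alt by force
  define K where "K = Max (insert 0 ((\<lambda>i. nat \<bar>i\<bar>) ` {i. U i \<noteq> A}))"
  have K: "\<bar>i\<bar> \<le> int K" if "U i \<noteq> A" for i
  proof -
    have "nat \<bar>i\<bar> \<le> K" unfolding K_def using U(1) that by (intro Max_ge) auto
    then show ?thesis by linarith
  qed
  show ?thesis
  proof (intro exI ballI impI)
    fix y assume y: "y \<in> topspace (full_shift_top A)" "\<forall>i. \<bar>i\<bar> \<le> int K \<longrightarrow> y i = x i"
    have "y \<in> PiE UNIV U"
    unfolding PiE_UNIV_domain Pi_iff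
    proof (intro ballI)
      fix i assume "i \<in> (UNIV::int set)" show "y i \<in> U i"
      proof (cases "U i = A")
        case True then show ?thesis using y(1) by (simp add: topspace_fs)
      next
        case False then show ?thesis using y(2) K[OF False] U(3) by (auto simp: PiE_UNIV_domain)
      qed
    qed
    then show "y \<in> S" using U(4) by blast
  qed
qed

lemma compact_fs: "finite A \<Longrightarrow> compact_space (full_shift_top A)"
  unfolding full_shift_top_def
  by (simp add: compact_space_product_topology compact_space_discrete_topology)

lemma separation:
  assumes "finite A" "closedin (full_shift_top A) C" "closedin (full_shift_top A) D" "C \<inter> D = {}"
  shows "\<exists>K::nat. \<forall>x\<in>C. \<forall>y\<in>topspace (full_shift_top A).
            (\<forall>i. \<bar>i\<bar> \<le> int K \<longrightarrow> y i = x i) \<longrightarrow> y \<notin> D"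
proof -
  let ?T = "full_shift_top A"
  have comp: "compactin ?T C" using closedin_compact_space[OF compact_fs[OF assms(1)] assms(2)] .
  have op: "openin ?T (topspace ?T - D)" using assms(3) by (simp add: closedin_def)
  have Csub: "C \<subseteq> topspace ?T" using assms(2) closedin_subset by blast
  have "\<forall>x\<in>C. \<exists>K::nat. \<forall>y \<in> topspace ?T. (\<forall>i. \<bar>i\<bar> \<le> int K \<longrightarrow> y i = x i) \<longrightarrow> y \<in> topspace ?T - D"
  proof
    fix x assume "x \<in> C"
    then have "x \<in> topspace ?T - D" using Csub assms(4) by blast
    then show "\<exists>K::nat. \<forall>y \<in> topspace ?T. (\<forall>i. \<bar>i\<bar> \<le> int K \<longrightarrow> y i = x i) \<longrightarrow> y \<in> topspace ?T - D"
      using locality[OF op] by blast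
  qed
  then obtain Kf where Kf: "\<And>x y. x \<in> C \<Longrightarrow> y \<in> topspace ?T \<Longrightarrow> (\<forall>i. \<bar>i\<bar> \<le> int (Kf x) \<longrightarrow> y i = x i) \<Longrightarrow> y \<in> topspace ?T - D"
    by metis
  define Nb where "Nb x = {y \<in> topspace ?T. \<forall>i\<in>{- int (Kf x)..int (Kf x)}. y i = x i}" for x
  have "\<forall>U\<in>Nb ` C. openin ?T U" unfolding Nb_def by (auto intro!: basic_open)
  moreover have "C \<subseteq> \<Union>(Nb ` C)" using Csub unfolding Nb_def by auto
  ultimately obtain F where F: "finite F" "F \<subseteq> Nb ` C" "C \<subseteq> \<Union>F"
    using comp unfolding compactin_def by meson
  then obtain C' where C': "C' \<subseteq> C" "finite C'" "F = Nb ` C'"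
    by (meson finite_subset_image)
  define K where "K = Max (insert 0 (Kf ` C'))"
  have KK: "Kf x' \<le> K" if "x' \<in> C'" for x' unfolding K_def using C' that by (intro Max_ge) auto
  show ?thesis
  proof (intro exI ballI impI)
    fix x y assume x: "x \<in> C" and y: "y \<in> topspace ?T" and ag: "\<forall>i. \<bar>i\<bar> \<le> int K \<longrightarrow> y i = x i"
    obtain x' where x': "x' \<in> C'" "x \<in> Nb x'" using F C' x by blast
    have "\<forall>i. \<bar>i\<bar> \<le> int (Kf x') \<longrightarrow> y i = x' i"
    proof (intro allI impI)
      fix i :: int assume i: "\<bar>i\<bar> \<le> int (Kf x')"
      then have "\<bar>i\<bar> \<le> int K" using KK[OF x'(1)] by linarith
      then have "y i = x i" using ag by blast
      also have "x i = x' i" using x'(2) i unfolding Nb_def by (auto simp: abs_le_iff)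
      finally show "y i = x' i" .
    qed
    then show "y \<notin> D" using Kf[of x' y] C' x' y by blast
  qed
qed

lemma space_borel_of_top[simp]: "space (borel_of_top T) = topspace T"
  unfolding borel_of_top_def by (rule space_measure_of) (auto dest: openin_subset)

lemma sets_borel_of_top: "sets (borel_of_top T) = sigma_sets (topspace T) {U. openin T U}"
  unfolding borel_of_top_def by (rule sets_measure_of) (auto dest: openin_subset)

lemma open_meas: "openin T U \<Longrightarrow> U \<in> sets (borel_of_top T)"
  unfolding sets_borel_of_top by auto

lemma cont_meas:
  assumes "continuous_map T1 T2 g"
  shows "g \<in> measurable (borel_of_top T1) (borel_of_top T2)"
proof -
  have "g \<in> measurable (borel_of_top T1) (sigma (topspace T2) {U. openin T2 U})"
  proof (rule measurable_measure_of)
    show "{U. openin T2 U} \<subseteq> Pow (topspace T2)" by (auto dest: openin_subset)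
    show "g \<in> space (borel_of_top T1) \<rightarrow> topspace T2"
      using assms by (auto simp: continuous_map_def)
    fix U assume "U \<in> {U. openin T2 U}"
    then have "openin T1 {x \<in> topspace T1. g x \<in> U}"
      using openin_continuous_map_preimage[OF assms] by auto
    moreover have "g -` U \<inter> space (borel_of_top T1) = {x \<in> topspace T1. g x \<in> U}" by auto
    ultimately show "g -` U \<inter> space (borel_of_top T1) \<in> sets (borel_of_top T1)"
      by (simp add: open_meas)
  qed
  then show ?thesis unfolding borel_of_top_def .
qed

definition inv_set :: "int \<Rightarrow> (int \<Rightarrow> 'b) set \<Rightarrow> bool" where
  "inv_set t Z \<longleftrightarrow> (\<forall>y. shz t y \<in> Z \<longleftrightarrow> y \<in> Z)"

lemma shz_inv[simp]: "shz t (shz (-t) y) = y" "shz (-t) (shz t y) = y" by simp_all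

lemma shz_inj: "shz t x = shz t y \<Longrightarrow> x = y"
  by (metis shz_inv(2))

lemma inv_of_image: "shz t ` Z = Z \<Longrightarrow> inv_set t Z"
  unfolding inv_set_def by (metis image_iff shz_inj)

lemma inv_image: assumes "inv_set t Z" shows "shz t ` Z = Z"
proof
  show "shz t ` Z \<subseteq> Z" using assms by (auto simp: inv_set_def)
  show "Z \<subseteq> shz t ` Z"
  proof
    fix z assume "z \<in> Z"
    moreover have "shz t (shz (-t) z) = z" by simp
    ultimately show "z \<in> shz t ` Z" using assms unfolding inv_set_def by (metis image_eqI)
  qed
qed

lemma inv_neg: "inv_set t Z \<Longrightarrow> inv_set (-t) Z"
  unfolding inv_set_def by (metis shz_inv(1))

lemma inv_add: "inv_set s Z \<Longrightarrow> inv_set t Z \<Longrightarrow> inv_set (s + t) Z"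
  unfolding inv_set_def by (metis shz_shz)

lemma inv_zero: "inv_set 0 Z" by (simp add: inv_set_def)

lemma inv_mult_nat: "inv_set t Z \<Longrightarrow> inv_set (int n * t) Z"
proof (induction n)
  case 0 then show ?case by (simp add: inv_zero)
next
  case (Suc n)
  then have "inv_set (t + int n * t) Z" by (intro inv_add) auto
  then show ?case by (simp add: algebra_simps)
qed

lemma inv_mult: assumes "inv_set t Z" shows "inv_set (k * t) Z"
proof (cases k rule: int_cases)
  case (nonneg n) then show ?thesis using inv_mult_nat[OF assms] by simp
next
  case (neg n)
  then have "inv_set (- (int (Suc n) * t)) Z" using inv_neg inv_mult_nat[OF assms] by blast
  then show ?thesis using neg by (metis minus_mult_left)
qed

lemma inv_Int: "inv_set t Z \<Longrightarrow> inv_set t W \<Longrightarrow> inv_set t (Z \<inter> W)"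
  unfolding inv_set_def by auto

lemma word_at_eq:
  assumes "length w = n"
  shows "word_at x j n = w \<longleftrightarrow> (\<forall>i \<in> {j..<j + int n}. x i = w ! nat (i - j))"
proof
  assume h: "word_at x j n = w"
  show "\<forall>i \<in> {j..<j + int n}. x i = w ! nat (i - j)"
  proof
    fix i assume i: "i \<in> {j..<j + int n}"
    then have k: "nat (i - j) < n" by auto
    have "w ! nat (i - j) = x (j + int (nat (i - j)))"
      using h k unfolding word_at_def by auto
    then show "x i = w ! nat (i - j)" using i by auto
  qed
next
  assume h: "\<forall>i \<in> {j..<j + int n}. x i = w ! nat (i - j)"
  show "word_at x j n = w"
    unfolding word_at_def
  proof (rule nth_equalityI)
    show "length (map (\<lambda>i. x (j + int i)) [0..<n]) = length w" using assms by simp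
    fix k assume "k < length (map (\<lambda>i. x (j + int i)) [0..<n])"
    then have k: "k < n" by simp
    then have "x (j + int k) = w ! nat (j + int k - j)" using h by auto
    then show "map (\<lambda>i. x (j + int i)) [0..<n] ! k = w ! k" using k by simp
  qed
qed

lemma length_lang: "w \<in> lang n Z \<Longrightarrow> length w = n"
  unfolding lang_def word_at_def by auto

lemma cont_word:
  assumes "X \<subseteq> topspace (full_shift_top A)"
  shows "continuous_map (subtopology (full_shift_top A) X) (discrete_topology (lang n X)) (\<lambda>x. word_at x j n)"
  unfolding continuous_map_def
proof (intro conjI allI impI)
  show "(\<lambda>x. word_at x j n) \<in> topspace (subtopology (full_shift_top A) X) \<rightarrow> topspace (discrete_topology (lang n X))"
    by (auto simp: lang_def)
  fix U assume "openin (discrete_topology (lang n X)) U"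
  then have U: "U \<subseteq> lang n X" by simp
  let ?T = "full_shift_top A"
  define V where "V = (\<Union>w\<in>U. {y \<in> topspace ?T. \<forall>i \<in> {j..<j + int n}. y i = w ! nat (i - j)})"
  have "openin ?T V" unfolding V_def by (intro openin_Union) (auto intro!: basic_open)
  moreover have "{x \<in> topspace (subtopology ?T X). word_at x j n \<in> U} = V \<inter> X"
  proof -
    have "word_at x j n \<in> U \<longleftrightarrow> (\<exists>w\<in>U. \<forall>i \<in> {j..<j + int n}. x i = w ! nat (i - j))" for x
      using word_at_eq[of _ n x j] U length_lang by blast
    then show ?thesis unfolding V_def using assms by auto
  qed
  ultimately show "openin (subtopology ?T X) {x \<in> topspace (subtopology ?T X). word_at x j n \<in> U}"
    by (auto simp: openin_subtopology)
qed

lemma cont_bc: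
  assumes "X \<subseteq> topspace (full_shift_top A)"
  shows "continuous_map (subtopology (full_shift_top A) X) (full_shift_top (lang m X)) (block_code m)"
  apply (subst full_shift_top_def[of "lang m X"])
  unfolding continuous_map_componentwise_UNIV
  using cont_word[OF assms] by (simp add: block_code_def)

lemma shz_meas_gen:
  assumes "Z \<subseteq> topspace (full_shift_top B0)" "\<And>y. y \<in> Z \<Longrightarrow> shz t y \<in> Z"
    and "S \<in> sets (borel_of_top (subtopology (full_shift_top B0) Z))"
  shows "{y\<in>Z. shz t y \<in> S} \<in> sets (borel_of_top (subtopology (full_shift_top B0) Z))"
proof -
  have c: "continuous_map (subtopology (full_shift_top B0) Z) (subtopology (full_shift_top B0) Z) (shz t)"
    unfolding continuous_map_in_subtopology
    using continuous_map_from_subtopology[OF cont_shz] assms(2) by auto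
  have "shz t -` S \<inter> space (borel_of_top (subtopology (full_shift_top B0) Z))
     \<in> sets (borel_of_top (subtopology (full_shift_top B0) Z))"
    by (rule measurable_sets[OF cont_meas[OF c] assms(3)])
  moreover have "shz t -` S \<inter> space (borel_of_top (subtopology (full_shift_top B0) Z)) = {y\<in>Z. shz t y \<in> S}"
    using assms(1) by auto
  ultimately show ?thesis by simp
qed

lemma finite_lang:
  assumes "finite B" "\<And>x i. x \<in> Z \<Longrightarrow> x i \<in> B"
  shows "finite (lang n Z)"
proof (rule finite_subset[OF _ finite_lists_length_eq[OF assms(1), of n]])
  show "lang n Z \<subseteq> {xs. set xs \<subseteq> B \<and> length xs = n}"
    using assms(2) unfolding lang_def word_at_def by auto
qed

lemma lang_ne: "Z \<noteq> {} \<Longrightarrow> lang n Z \<noteq> {}"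
  unfolding lang_def by blast




locale bsetup =
  fixes A :: "'b set" and X Xj :: "(int \<Rightarrow> 'b) set" and m :: nat and \<nu> :: "(int \<Rightarrow> 'b) measure"
  assumes finA: "finite A"
    and Xclosed: "closedin (full_shift_top A) X"
    and Xinv: "inv_set 1 X"
    and Xmin: "\<And>W. W \<subseteq> X \<Longrightarrow> W \<noteq> {} \<Longrightarrow> closed_invariant A shift W \<Longrightarrow> W = X"
    and m1: "m \<ge> 1"
    and Xjsub: "Xj \<subseteq> X" and Xjne: "Xj \<noteq> {}"
    and Xjclosed: "closedin (full_shift_top A) Xj"
    and Xjinv: "inv_set (int m) Xj"
    and Xjmin: "\<And>W. W \<subseteq> Xj \<Longrightarrow> W \<noteq> {} \<Longrightarrow> closed_invariant A (shift ^^ m) W \<Longrightarrow> W = Xj"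
    and nu: "invariant_prob A X \<nu>"
begin

abbreviation "T \<equiv> full_shift_top A"

lemma Xtop: "X \<subseteq> topspace T" using Xclosed closedin_subset by blast

lemma Xinv_all: "inv_set t X" using inv_mult[OF Xinv, of t] by simp

definition P :: "int \<Rightarrow> (int \<Rightarrow> 'b) set" where "P i = {y. shz i y \<in> Xj}"

lemma P_sub: "P i \<subseteq> X"
  using Xinv_all[of i] Xjsub unfolding P_def inv_set_def by auto

lemma P0: "P 0 = Xj" unfolding P_def by simp

lemma P_closed: "closedin T (P i)"
proof -
  have "P i = {y \<in> topspace T. shz i y \<in> Xj}" using P_sub Xtop unfolding P_def by auto
  then show ?thesis using closedin_continuous_map_preimage[OF cont_shz Xjclosed] by simp
qed

lemma Pm: "inv_set (int m) (P i)"
  unfolding inv_set_def P_def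
proof (intro allI)
  fix y :: "int \<Rightarrow> 'b"
  have e: "shz i (shz (int m) y) = shz (int m) (shz i y)" by (simp add: add.commute)
  have "shz (int m) (shz i y) \<in> Xj \<longleftrightarrow> shz i y \<in> Xj" using Xjinv unfolding inv_set_def by blast
  then show "(shz (int m) y \<in> {y. shz i y \<in> Xj}) = (y \<in> {y. shz i y \<in> Xj})"
    unfolding mem_Collect_eq e .
qed

lemma cover: "X = (\<Union>i\<in>{0..<int m}. P i)"
proof -
  define U where "U = (\<Union>i\<in>{0..<int m}. P i)"
  have "inv_set 1 U"
    unfolding inv_set_def
  proof (intro allI iffI)
    fix y assume "shz 1 y \<in> U"
    then obtain i where i: "i \<in> {0..<int m}" "shz (i + 1) y \<in> Xj" unfolding U_def P_def by auto
    show "y \<in> U"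
    proof (cases "i + 1 < int m")
      case True then show ?thesis using i unfolding U_def P_def by (intro UN_I[of "i+1"]) auto
    next
      case False then have "i + 1 = int m" using i by auto
      then have "shz (int m) y \<in> Xj" using i by simp
      then have "y \<in> Xj" using Xjinv unfolding inv_set_def by blast
      then show ?thesis unfolding U_def P_def using m1 by (intro UN_I[of 0]) auto
    qed
  next
    fix y assume "y \<in> U"
    then obtain i where i: "i \<in> {0..<int m}" "shz i y \<in> Xj" unfolding U_def P_def by auto
    show "shz 1 y \<in> U"
    proof (cases "i \<ge> 1")
      case True then show ?thesis using i unfolding U_def P_def by (intro UN_I[of "i - 1"]) auto
    next
      case False then have "i = 0" using i by auto
      then have "shz (int m) y \<in> Xj" using i Xjinv unfolding inv_set_def by auto
      then have "shz (int m - 1) (shz 1 y) \<in> Xj" by simp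
      then show ?thesis unfolding U_def P_def using m1 by (intro UN_I[of "int m - 1"]) auto
    qed
  qed
  have "U \<subseteq> X" unfolding U_def using P_sub by auto
  moreover have "U \<noteq> {}" unfolding U_def using P0 Xjne m1 by (auto intro!: exI[of _ 0])
  moreover have "closed_invariant A shift U"
  proof -
    have "closedin T U" unfolding U_def by (intro closedin_Union) (auto intro: P_closed)
    moreover have "shz 1 ` U = U" using inv_image[OF \<open>inv_set 1 U\<close>] .
    ultimately show ?thesis unfolding closed_invariant_def shift_eq by simp
  qed
  ultimately have "U = X" using Xmin by blast
  then show ?thesis unfolding U_def by simp
qed

lemma P_eq:
  assumes "P i \<inter> Xj \<noteq> {}"
  shows "P i = Xj"
proof -
  have "inv_set (int m) (P i \<inter> Xj)" using Pm Xjinv by (rule inv_Int)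
  then have "closed_invariant A (shift ^^ m) (P i \<inter> Xj)"
    unfolding closed_invariant_def funpow_shift
    using inv_image[of "int m" "P i \<inter> Xj"] closedin_Int[OF P_closed Xjclosed] by simp
  then have eqX: "P i \<inter> Xj = Xj" by (rule Xjmin[OF Int_lower2 assms])
  have sub: "shz i y \<in> Xj" if "y \<in> Xj" for y
  proof -
    have "y \<in> P i" using that eqX by blast
    then show ?thesis by (simp add: P_def)
  qed
  have it: "shz (int n * i) y \<in> Xj" if "y \<in> Xj" for n y
  proof (induction n)
    case 0 then show ?case using that by simp
  next
    case (Suc n)
    then have pr: "shz i (shz (int n * i) y) \<in> Xj" by (rule sub)
    have e: "shz i (shz (int n * i) y) = shz (int (Suc n) * i) y"
      unfolding shz_shz by (simp add: algebra_simps)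
    from pr show ?case unfolding e .
  qed
  show ?thesis
  proof
    show "P i \<subseteq> Xj"
    proof
      fix y assume "y \<in> P i"
      then have "shz i y \<in> Xj" unfolding P_def by simp
      then have "shz (int (m - 1) * i) (shz i y) \<in> Xj" by (rule it)
      moreover have "int (m - 1) * i + i = i * int m"
      proof -
        have "int (m - 1) = int m - 1" using m1 by simp
        then show ?thesis by (simp add: algebra_simps)
      qed
      ultimately have "shz (i * int m) y \<in> Xj" by simp
      then show "y \<in> Xj" using inv_mult[OF Xjinv, of i] unfolding inv_set_def by blast
    qed
    show "Xj \<subseteq> P i" using eqX by blast
  qed
qed

definition Dset where "Dset = (\<Union>i\<in>{i\<in>{0..<int m}. P i \<inter> Xj = {}}. P i)"

lemma Dset_closed: "closedin T Dset"
proof -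
  have "finite {i\<in>{0..<int m}. P i \<inter> Xj = {}}" by (rule finite_subset[of _ "{0..<int m}"]) auto
  then show ?thesis unfolding Dset_def by (intro closedin_Union) (auto intro: P_closed)
qed

lemma Dset_disj: "Xj \<inter> Dset = {}" unfolding Dset_def by auto

lemma Dset_cover: "X - Xj \<subseteq> Dset"
proof
  fix y assume y: "y \<in> X - Xj"
  then obtain i where i: "i \<in> {0..<int m}" "y \<in> P i" using cover by blast
  then have "P i \<inter> Xj = {}" using P_eq y by blast
  then show "y \<in> Dset" unfolding Dset_def using i by blast
qed

lemma sep_exists: "\<exists>K::nat. \<forall>x\<in>Xj. \<forall>y\<in>X. (\<forall>i. \<bar>i\<bar> \<le> int K \<longrightarrow> y i = x i) \<longrightarrow> y \<in> Xj"
proof -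
  obtain K :: nat where K: "\<forall>x\<in>Xj. \<forall>y\<in>topspace T. (\<forall>i. \<bar>i\<bar> \<le> int K \<longrightarrow> y i = x i) \<longrightarrow> y \<notin> Dset"
    using separation[OF finA Xjclosed Dset_closed Dset_disj] by blast
  show ?thesis using K Dset_cover Xtop by blast
qed

end



context bsetup
begin

lemma nu_prob: "prob_space \<nu>" and space_nu: "space \<nu> = X"
  and sets_nu: "sets \<nu> = sets (borel_of_top (subtopology T X))"
  and nu_inv: "\<And>B. B \<in> sets \<nu> \<Longrightarrow> emeasure \<nu> (shift -` B \<inter> X) = emeasure \<nu> B"
  using nu unfolding invariant_prob_def by auto

interpretation nuP: prob_space \<nu> by (rule nu_prob)

lemma meas_open: "openin (subtopology T X) U \<Longrightarrow> U \<in> sets \<nu>"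
  unfolding sets_nu by (rule open_meas)

lemma meas_closed:
  assumes "closedin T C" "C \<subseteq> X"
  shows "C \<in> sets \<nu>"
proof -
  have "closedin (subtopology T X) C" using assms closedin_subtopology by (metis inf.absorb1)
  then have "openin (subtopology T X) (X - C)"
    using Xtop by (auto simp: closedin_def inf.absorb2)
  then have "X - C \<in> sets \<nu>" by (rule meas_open)
  then have "space \<nu> - (X - C) \<in> sets \<nu>" by blast
  moreover have "space \<nu> - (X - C) = C" using assms(2) space_nu by auto
  ultimately show ?thesis by simp
qed

lemma Xj_meas: "Xj \<in> sets \<nu>" using meas_closed[OF Xjclosed Xjsub] .

lemma shz_meas: "B \<in> sets \<nu> \<Longrightarrow> {y\<in>X. shz t y \<in> B} \<in> sets \<nu>"
  unfolding sets_nu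
  by (rule shz_meas_gen[OF Xtop]) (use Xinv_all in \<open>auto simp: inv_set_def\<close>)

lemma inv_iter:
  assumes "B \<in> sets \<nu>"
  shows "emeasure \<nu> {y\<in>X. shz (int n) y \<in> B} = emeasure \<nu> B"
proof (induction n)
  case 0
  have "B \<subseteq> X" using sets.sets_into_space[OF assms] space_nu by simp
  then have "{y\<in>X. shz (int 0) y \<in> B} = B" by auto
  then show ?case by simp
next
  case (Suc n)
  have eqn: "{y\<in>X. shz (int (Suc n)) y \<in> B} = shift -` {z\<in>X. shz (int n) z \<in> B} \<inter> X"
  proof -
    have e: "shz (int (Suc n)) y = shz (int n) (shz 1 y)" for y :: "int \<Rightarrow> 'b" by (simp add: add.commute)
    have x: "shz 1 y \<in> X \<longleftrightarrow> y \<in> X" for y using Xinv unfolding inv_set_def by blast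
    show ?thesis unfolding shift_eq
    proof (rule set_eqI)
      fix y
      show "y \<in> {y \<in> X. shz (int (Suc n)) y \<in> B} \<longleftrightarrow> y \<in> shz 1 -` {z \<in> X. shz (int n) z \<in> B} \<inter> X"
        unfolding e[of y] vimage_eq Int_iff mem_Collect_eq using x[of y] by blast
    qed
  qed
  have "emeasure \<nu> {y\<in>X. shz (int (Suc n)) y \<in> B} = emeasure \<nu> (shift -` {z\<in>X. shz (int n) z \<in> B} \<inter> X)"
    by (simp only: eqn)
  also have "\<dots> = emeasure \<nu> {z\<in>X. shz (int n) z \<in> B}"
    by (rule nu_inv[OF shz_meas[OF assms, of "int n"]])
  also have "\<dots> = emeasure \<nu> B" by (rule Suc)
  finally show ?case .
qed

lemma P_meas_eq: "i \<ge> 0 \<Longrightarrow> emeasure \<nu> (P i) = emeasure \<nu> Xj"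
proof -
  assume i: "i \<ge> 0"
  have "P i = {y\<in>X. shz (int (nat i)) y \<in> Xj}" using P_sub i unfolding P_def by auto
  then show ?thesis using inv_iter[OF Xj_meas, of "nat i"] i by simp
qed

lemma Xj_pos: "emeasure \<nu> Xj \<noteq> 0"
proof
  assume z: "emeasure \<nu> Xj = 0"
  have Pm: "P i \<in> sets \<nu>" for i using meas_closed[OF P_closed P_sub] .
  have "1 = emeasure \<nu> X" using nuP.emeasure_space_1 space_nu by simp
  also have "\<dots> = emeasure \<nu> (\<Union>i\<in>{0..<int m}. P i)" using cover by simp
  also have "\<dots> \<le> (\<Sum>i\<in>{0..<int m}. emeasure \<nu> (P i))"
    using Pm by (intro emeasure_subadditive_finite) auto
  also have "\<dots> = 0" using P_meas_eq z by simp
  finally show False by simp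
qed

lemma Xj_fin: "emeasure \<nu> Xj \<noteq> \<infinity>" by simp

end



context bsetup
begin

interpretation nuP: prob_space \<nu> by (rule nu_prob)

definition "Lb = lang m X"
definition "Yb = block_code m ` Xj"
abbreviation "TL \<equiv> full_shift_top Lb"
definition "Nb = borel_of_top (subtopology TL Yb)"
definition "y0 = block_code m (SOME x. x \<in> Xj)"
definition "fb x = (if x \<in> Xj then block_code m x else y0)"
definition "mu = distr (uniform_measure \<nu> Xj) Nb fb"

lemma bc_in: "x \<in> X \<Longrightarrow> block_code m x \<in> topspace TL"
  unfolding topspace_fs Lb_def block_code_def lang_def by blast

lemma Ytop: "Yb \<subseteq> topspace TL" unfolding Yb_def using bc_in Xjsub by blast

lemma y0Y: "y0 \<in> Yb" unfolding y0_def Yb_def using Xjne by (simp add: some_in_eq)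

lemma Nb_eq: "Nb = sigma Yb {U. openin (subtopology TL Yb) U}"
  unfolding Nb_def borel_of_top_def using Ytop by (simp add: inf.absorb2)

lemma space_Nb: "space Nb = Yb" unfolding Nb_def using Ytop by (simp add: inf.absorb2)

lemma bc_shift: "shz 1 (block_code m x) = block_code m (shz (int m) x)"
  unfolding block_code_def word_at_def shz_def by (simp add: algebra_simps)

lemma Yinv: "y \<in> Yb \<Longrightarrow> shz 1 y \<in> Yb"
  unfolding Yb_def using bc_shift Xjinv unfolding inv_set_def by auto

lemma f_meas: "fb \<in> measurable \<nu> Nb"
proof -
  have eq: "measurable \<nu> Nb = measurable (borel_of_top (subtopology T X)) (sigma Yb {U. openin (subtopology TL Yb) U})"
    using sets_nu Nb_eq by (intro measurable_cong_sets) auto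
  have "fb \<in> measurable (borel_of_top (subtopology T X)) (sigma Yb {U. openin (subtopology TL Yb) U})"
  proof (rule measurable_measure_of)
    show "{U. openin (subtopology TL Yb) U} \<subseteq> Pow Yb"
      using openin_subset by fastforce
    show "fb \<in> space (borel_of_top (subtopology T X)) \<rightarrow> Yb"
      using y0Y unfolding fb_def Yb_def by auto
    fix U assume "U \<in> {U. openin (subtopology TL Yb) U}"
    then obtain V where V: "openin TL V" "U = V \<inter> Yb" by (auto simp: openin_subtopology)
    have o: "openin (subtopology T X) {x \<in> topspace (subtopology T X). block_code m x \<in> V}"
      using openin_continuous_map_preimage[OF cont_bc[OF Xtop] V(1)[unfolded Lb_def]] by (simp add: Lb_def)
    have s1: "Xj \<inter> {x \<in> topspace (subtopology T X). block_code m x \<in> V} \<in> sets \<nu>"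
      using Xj_meas meas_open[OF o] by blast
    have s2: "X - Xj \<in> sets \<nu>" using Xj_meas space_nu by (metis sets.compl_sets)
    have e: "fb -` U \<inter> space (borel_of_top (subtopology T X)) =
       (Xj \<inter> {x \<in> topspace (subtopology T X). block_code m x \<in> V}) \<union> (if y0 \<in> U then X - Xj else {})"
      using Xtop Xjsub V(2) unfolding fb_def Yb_def by (auto split: if_splits)
    show "fb -` U \<inter> space (borel_of_top (subtopology T X)) \<in> sets (borel_of_top (subtopology T X))"
      unfolding e using s1 s2 sets_nu by auto
  qed
  then show ?thesis using eq by simp
qed

lemma f_meas_u: "fb \<in> measurable (uniform_measure \<nu> Xj) Nb"
  using f_meas by (simp cong: measurable_cong_sets)

lemma mu_prob: "prob_space mu"
  unfolding mu_def
  by (rule prob_space.prob_space_distr[OF prob_space_uniform_measure[OF Xj_pos Xj_fin] f_meas_u])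

lemma space_mu: "space mu = Yb" unfolding mu_def by (simp add: space_Nb)
lemma sets_mu: "sets mu = sets Nb" unfolding mu_def by simp

lemma pre_eq: "Xj \<inter> (fb -` B \<inter> space (uniform_measure \<nu> Xj)) = {x\<in>Xj. block_code m x \<in> B}"
  using Xjsub space_nu unfolding fb_def by auto

lemma D_meas: "B \<in> sets Nb \<Longrightarrow> {x\<in>Xj. block_code m x \<in> B} \<in> sets \<nu>"
proof -
  assume B: "B \<in> sets Nb"
  have "fb -` B \<inter> space (uniform_measure \<nu> Xj) \<in> sets \<nu>"
    using measurable_sets[OF f_meas_u B] by simp
  then have "Xj \<inter> (fb -` B \<inter> space (uniform_measure \<nu> Xj)) \<in> sets \<nu>" using Xj_meas by blast
  then show ?thesis unfolding pre_eq .
qed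

lemma mu_emeasure: "B \<in> sets Nb \<Longrightarrow> emeasure mu B = emeasure \<nu> {x\<in>Xj. block_code m x \<in> B} / emeasure \<nu> Xj"
proof -
  assume B: "B \<in> sets Nb"
  have "emeasure mu B = emeasure (uniform_measure \<nu> Xj) (fb -` B \<inter> space (uniform_measure \<nu> Xj))"
    unfolding mu_def by (rule emeasure_distr[OF f_meas_u B])
  also have "\<dots> = emeasure \<nu> (Xj \<inter> (fb -` B \<inter> space (uniform_measure \<nu> Xj))) / emeasure \<nu> Xj"
    using measurable_sets[OF f_meas_u B] Xj_meas by (intro emeasure_uniform_measure) auto
  finally show ?thesis unfolding pre_eq .
qed

lemma mu_measure: "B \<in> sets Nb \<Longrightarrow> measure mu B = measure \<nu> {x\<in>Xj. block_code m x \<in> B} / measure \<nu> Xj"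
proof -
  assume B: "B \<in> sets Nb"
  have "measure mu B = measure (uniform_measure \<nu> Xj) (fb -` B \<inter> space (uniform_measure \<nu> Xj))"
    unfolding mu_def by (rule measure_distr[OF f_meas_u B])
  also have "\<dots> = measure \<nu> (Xj \<inter> (fb -` B \<inter> space (uniform_measure \<nu> Xj))) / measure \<nu> Xj"
    using measurable_sets[OF f_meas_u B] Xj_meas Xj_pos by (intro measure_uniform_measure) auto
  finally show ?thesis unfolding pre_eq .
qed

lemma shiftY_meas: "B \<in> sets Nb \<Longrightarrow> shift -` B \<inter> Yb \<in> sets Nb"
proof -
  assume "B \<in> sets Nb"
  then have "{y\<in>Yb. shz 1 y \<in> B} \<in> sets Nb"
    unfolding Nb_def using shz_meas_gen[of Yb Lb 1 B] Ytop Yinv by blast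
  moreover have "{y\<in>Yb. shz 1 y \<in> B} = shift -` B \<inter> Yb" unfolding shift_eq by auto
  ultimately show ?thesis by simp
qed

lemma mu_inv: "B \<in> sets mu \<Longrightarrow> emeasure mu (shift -` B \<inter> Yb) = emeasure mu B"
proof -
  assume "B \<in> sets mu"
  then have B: "B \<in> sets Nb" using sets_mu by simp
  have "{x\<in>Xj. block_code m x \<in> shift -` B \<inter> Yb} = {x\<in>X. shz (int m) x \<in> {z\<in>Xj. block_code m z \<in> B}}"
  proof (rule set_eqI)
    fix x
    have a: "x \<in> Xj \<longleftrightarrow> x \<in> X \<and> shz (int m) x \<in> Xj" using Xjinv Xjsub unfolding inv_set_def by blast
    have b: "shift (block_code m x) = block_code m (shz (int m) x)" using bc_shift shift_eq by metis
    show "x \<in> {x\<in>Xj. block_code m x \<in> shift -` B \<inter> Yb} \<longleftrightarrow> x \<in> {x\<in>X. shz (int m) x \<in> {z\<in>Xj. block_code m z \<in> B}}"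
      using a b unfolding Yb_def by auto
  qed
  then have "emeasure \<nu> {x\<in>Xj. block_code m x \<in> shift -` B \<inter> Yb} = emeasure \<nu> {x\<in>Xj. block_code m x \<in> B}"
    using inv_iter[OF D_meas[OF B], of m] by simp
  then show ?thesis using mu_emeasure[OF B] mu_emeasure[OF shiftY_meas[OF B]] by simp
qed

lemma mu_invariant: "invariant_prob Lb Yb mu"
  unfolding invariant_prob_def
  using mu_prob space_mu sets_mu mu_inv by (simp add: Nb_def)

end



context bsetup
begin

interpretation nuP: prob_space \<nu> by (rule nu_prob)

definition "K = (SOME K::nat. \<forall>x\<in>Xj. \<forall>y\<in>X. (\<forall>i. \<bar>i\<bar> \<le> int K \<longrightarrow> y i = x i) \<longrightarrow> y \<in> Xj)"

lemma K_prop: "x \<in> Xj \<Longrightarrow> y \<in> X \<Longrightarrow> (\<And>i. \<bar>i\<bar> \<le> int K \<Longrightarrow> y i = x i) \<Longrightarrow> y \<in> Xj"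
  using someI_ex[OF sep_exists] unfolding K_def by blast

lemma cyl_eq: "cylinder U = {z. \<forall>i\<in>{0..<int (length U)}. z i = U ! nat i}"
proof (rule set_eqI)
  fix z
  show "z \<in> cylinder U \<longleftrightarrow> z \<in> {z. \<forall>i\<in>{0..<int (length U)}. z i = U ! nat i}"
    unfolding cylinder_def mem_Collect_eq
  proof
    assume h: "\<forall>i<length U. z (int i) = U ! i"
    show "\<forall>i\<in>{0..<int (length U)}. z i = U ! nat i"
    proof
      fix i assume i: "i \<in> {0..<int (length U)}"
      then have "nat i < length U" by auto
      then have "z (int (nat i)) = U ! nat i" using h by blast
      then show "z i = U ! nat i" using i by simp
    qed
  next
    assume h: "\<forall>i\<in>{0..<int (length U)}. z i = U ! nat i"
    show "\<forall>i<length U. z (int i) = U ! i"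
    proof (intro allI impI)
      fix i assume "i < length U"
      then have "int i \<in> {0..<int (length U)}" by auto
      then show "z (int i) = U ! i" using h by fastforce
    qed
  qed
qed

lemma cyl_meas: "cylinder U \<inter> Yb \<in> sets Nb"
proof -
  have "openin TL {z \<in> topspace TL. \<forall>i\<in>{0..<int (length U)}. z i = U ! nat i}"
    by (rule basic_open) simp
  moreover have "cylinder U \<inter> Yb = {z \<in> topspace TL. \<forall>i\<in>{0..<int (length U)}. z i = U ! nat i} \<inter> Yb"
    using Ytop unfolding cyl_eq by auto
  ultimately have "openin (subtopology TL Yb) (cylinder U \<inter> Yb)"
    by (auto simp: openin_subtopology)
  then show ?thesis unfolding Nb_def by (rule open_meas)
qed

lemma Xj_measure: "0 < measure \<nu> Xj" "measure \<nu> Xj \<le> 1"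
  using Xj_pos nuP.emeasure_eq_measure by (auto simp: zero_less_measure_iff)

lemma lower:
  assumes U: "U \<in> lang n Yb" and L1: "L0 \<ge> 2 * K + 1" and L2: "L0 \<ge> n * m + K"
  shows "\<exists>v\<in>lang L0 X. measure \<nu> (cylinder v \<inter> X) \<le> measure mu (cylinder U \<inter> Yb)"
proof -
  obtain y j where yj: "U = word_at y j n" "y \<in> Yb" using U unfolding lang_def by blast
  obtain x0 where x0: "x0 \<in> Xj" "y = block_code m x0" using yj(2) unfolding Yb_def by blast
  define x' where "x' = shz (j * int m) x0"
  have x'X: "x' \<in> Xj" using inv_mult[OF Xjinv, of j] x0(1) unfolding inv_set_def x'_def by blast
  define E where "E = {x\<in>Xj. block_code m x \<in> cylinder U \<inter> Yb}"
  define G where "G = {z\<in>X. \<forall>i\<in>{- int K..<int L0 - int K}. z i = x' i}"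
  have Emeas: "E \<in> sets \<nu>" unfolding E_def by (rule D_meas[OF cyl_meas])
  have "openin T {z \<in> topspace T. \<forall>i\<in>{- int K..<int L0 - int K}. z i = x' i}"
    by (rule basic_open) simp
  then have "openin (subtopology T X) G"
    unfolding G_def openin_subtopology using Xtop by blast
  then have Gmeas: "G \<in> sets \<nu>" by (rule meas_open)
  have lenU: "length U = n" using yj(1) by (simp add: word_at_def)
  have GE: "G \<subseteq> E"
  proof
    fix z assume z: "z \<in> G"
    then have zX: "z \<in> X" and za: "\<And>i. - int K \<le> i \<Longrightarrow> i < int L0 - int K \<Longrightarrow> z i = x' i"
      unfolding G_def by auto
    have zXj: "z \<in> Xj"
    proof (rule K_prop[OF x'X zX])
      fix i :: int assume "\<bar>i\<bar> \<le> int K"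
      then show "z i = x' i" using L1 by (intro za) auto
    qed
    have "block_code m z \<in> cylinder U"
      unfolding cylinder_def lenU
    proof (intro CollectI allI impI)
      fix k assume k: "k < n"
      have "U ! k = block_code m x0 (j + int k)" using yj(1) x0(2) k by (simp add: word_at_def)
      also have "\<dots> = word_at x0 ((j + int k) * int m) m" by (simp add: block_code_def)
      also have "\<dots> = word_at z (int k * int m) m"
        unfolding word_at_def
      proof (rule map_cong[OF refl])
        fix i assume "i \<in> set [0..<m]"
        then have i: "i < m" by simp
        have "int k * int m + int i < int n * int m"
        proof -
          have "int k + 1 \<le> int n" using k by simp
          then have "(int k + 1) * int m \<le> int n * int m" by (intro mult_right_mono) auto
          then show ?thesis using i by (simp add: algebra_simps)
        qed
        moreover have "int n * int m + int K \<le> int L0"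
        proof -
          have "int (n * m + K) \<le> int L0" using L2 by (simp only: of_nat_le_iff)
          then show ?thesis by (metis of_nat_add of_nat_mult)
        qed
        moreover have "0 \<le> int k * int m" by simp
        ultimately have c1: "- int K \<le> int k * int m + int i" and c2: "int k * int m + int i < int L0 - int K"
          by linarith+
        have "z (int k * int m + int i) = x' (int k * int m + int i)" by (rule za[OF c1 c2])
        also have "\<dots> = x0 ((j + int k) * int m + int i)"
          unfolding x'_def shz_def by (simp add: algebra_simps)
        finally show "x0 ((j + int k) * int m + int i) = z (int k * int m + int i)" by simp
      qed
      also have "\<dots> = block_code m z (int k)" by (simp add: block_code_def)
      finally show "block_code m z (int k) = U ! k" by simp
    qed
    moreover have "block_code m z \<in> Yb" using zXj unfolding Yb_def by blast
    ultimately show "z \<in> E" unfolding E_def using zXj by blast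
  qed
  define v where "v = word_at x' (- int K) L0"
  have vL: "v \<in> lang L0 X" unfolding v_def lang_def using x'X Xjsub by blast
  have lenv: "length v = L0" unfolding v_def word_at_def by simp
  have cylG: "cylinder v \<inter> X = {z\<in>X. shz (int K) z \<in> G}"
  proof (rule set_eqI)
    fix z
    have xx: "shz (int K) z \<in> X \<longleftrightarrow> z \<in> X" using Xinv_all unfolding inv_set_def by blast
    have "z \<in> cylinder v \<longleftrightarrow> (\<forall>i\<in>{- int K..<int L0 - int K}. shz (int K) z i = x' i)"
    proof
      assume h: "z \<in> cylinder v"
      show "\<forall>i\<in>{- int K..<int L0 - int K}. shz (int K) z i = x' i"
      proof
        fix i assume i: "i \<in> {- int K..<int L0 - int K}"
        define i' where "i' = nat (i + int K)"
        have i': "i' < L0" "int i' = i + int K" using i unfolding i'_def by auto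
        have "z (int i') = v ! i'" using h i' lenv unfolding cylinder_def by auto
        also have "\<dots> = x' (- int K + int i')" unfolding v_def word_at_def using i' by simp
        finally show "shz (int K) z i = x' i" using i' by (simp add: shz_def)
      qed
    next
      assume h: "\<forall>i\<in>{- int K..<int L0 - int K}. shz (int K) z i = x' i"
      show "z \<in> cylinder v"
        unfolding cylinder_def lenv
      proof (intro CollectI allI impI)
        fix i assume i: "i < L0"
        then have "int i - int K \<in> {- int K..<int L0 - int K}" by auto
        then have "shz (int K) z (int i - int K) = x' (int i - int K)" using h by blast
        then have "z (int i) = x' (- int K + int i)" by (simp add: shz_def)
        also have "\<dots> = v ! i" unfolding v_def word_at_def using i by simp
        finally show "z (int i) = v ! i" .
      qed
    qed
    then show "z \<in> cylinder v \<inter> X \<longleftrightarrow> z \<in> {z\<in>X. shz (int K) z \<in> G}"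
      unfolding G_def using xx by auto
  qed
  have "measure \<nu> (cylinder v \<inter> X) = measure \<nu> G"
    unfolding measure_def cylG using inv_iter[OF Gmeas, of K] by simp
  also have "\<dots> \<le> measure \<nu> E" using GE Emeas by (rule nuP.finite_measure_mono)
  also have "\<dots> \<le> measure \<nu> E / measure \<nu> Xj"
    using Xj_measure by (simp add: le_divide_eq mult_left_le)
  also have "\<dots> = measure mu (cylinder U \<inter> Yb)"
    unfolding E_def using mu_measure[OF cyl_meas] by simp
  finally show ?thesis using vL by blast
qed

end



context bsetup
begin

interpretation nuP: prob_space \<nu> by (rule nu_prob)

definition "mn N = Min {measure \<nu> (cylinder u \<inter> X) | u. u \<in> lang N X}"
definition "mY n = Min {measure mu (cylinder U \<inter> Yb) | U. U \<in> lang n Yb}"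

lemma fin_langX: "finite (lang N X)"
proof -
  have "x i \<in> A" if "x \<in> X" for x i using Xtop that unfolding topspace_fs by blast
  then show ?thesis by (rule finite_lang[OF finA])
qed

lemma ne_langX: "lang N X \<noteq> {}"
proof -
  have "X \<noteq> {}" using Xjne Xjsub by blast
  then show ?thesis by (rule lang_ne)
qed

lemma fin_Lb: "finite Lb" unfolding Lb_def by (rule fin_langX)

lemma fin_langY: "finite (lang n Yb)"
proof -
  have "x i \<in> Lb" if "x \<in> Yb" for x i using Ytop that unfolding topspace_fs by blast
  then show ?thesis by (rule finite_lang[OF fin_Lb])
qed

lemma ne_langY: "lang n Yb \<noteq> {}"
proof -
  have "Yb \<noteq> {}" using Xjne unfolding Yb_def by simp
  then show ?thesis by (rule lang_ne)
qed

lemma mn_le: "v \<in> lang N X \<Longrightarrow> mn N \<le> measure \<nu> (cylinder v \<inter> X)"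
proof -
  assume v: "v \<in> lang N X"
  have eq: "{measure \<nu> (cylinder u \<inter> X) | u. u \<in> lang N X} = (\<lambda>u. measure \<nu> (cylinder u \<inter> X)) ` lang N X"
    by blast
  show ?thesis unfolding mn_def eq using fin_langX v by (intro Min_le) auto
qed

lemma mY_ge:
  assumes "L0 \<ge> 2 * K + 1" "L0 \<ge> n * m + K"
  shows "mn L0 \<le> mY n"
proof -
  have eq: "{measure mu (cylinder U \<inter> Yb) | U. U \<in> lang n Yb} = (\<lambda>U. measure mu (cylinder U \<inter> Yb)) ` lang n Yb"
    by blast
  show ?thesis unfolding mY_def eq
  proof (subst Min_ge_iff)
    show "finite ((\<lambda>U. measure mu (cylinder U \<inter> Yb)) ` lang n Yb)" using fin_langY by simp
    show "(\<lambda>U. measure mu (cylinder U \<inter> Yb)) ` lang n Yb \<noteq> {}" using ne_langY by simp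
    show "\<forall>a\<in>(\<lambda>U. measure mu (cylinder U \<inter> Yb)) ` lang n Yb. mn L0 \<le> a"
    proof
      fix a assume "a \<in> (\<lambda>U. measure mu (cylinder U \<inter> Yb)) ` lang n Yb"
      then obtain U where U: "U \<in> lang n Yb" "a = measure mu (cylinder U \<inter> Yb)" by blast
      obtain v where v: "v \<in> lang L0 X" "measure \<nu> (cylinder v \<inter> X) \<le> measure mu (cylinder U \<inter> Yb)"
        using lower[OF U(1) assms] by blast
      show "mn L0 \<le> a" using mn_le[OF v(1)] v(2) U(2) by simp
    qed
  qed
qed

lemma final:
  assumes lim: "limsup (\<lambda>n::nat. ereal (real n * mn n)) > 0"
  shows "boshernitzan Lb Yb"
proof -
  obtain c where c: "0 < ereal c" "ereal c < limsup (\<lambda>n::nat. ereal (real n * mn n))"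
    using ereal_dense2[OF lim] by blast
  have cpos: "c > 0" using c(1) by simp
  have freq: "\<exists>N\<ge>N0. c < real N * mn N" for N0
  proof -
    have "ereal c < (SUP N\<in>{N0..}. ereal (real N * mn N))"
      using c(2) unfolding limsup_INF_SUP by (rule less_INF_D) simp
    then obtain N where "N \<in> {N0..}" "ereal c < ereal (real N * mn N)"
      unfolding less_SUP_iff by blast
    then show ?thesis by auto
  qed
  define g where "g n = ereal (real n * mY n)" for n
  have key: "\<exists>n\<ge>N0. c / (2 * real m) \<le> real n * mY n" for N0
  proof -
    obtain N where N: "N \<ge> 2 * K + 2 * m + m * N0 + 1" "c < real N * mn N"
      using freq by blast
    define n where "n = (N - K) div m"
    have m0: "m > 0" using m1 by simp
    have d1: "n * m \<le> N - K" unfolding n_def by (simp add: div_times_less_eq_dividend)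
    have d2: "N - K < n * m + m"
    proof -
      have "N - K = n * m + (N - K) mod m" unfolding n_def by simp
      moreover have "(N - K) mod m < m" using m0 by simp
      ultimately show ?thesis by linarith
    qed
    have nN0: "n \<ge> N0"
    proof -
      have "m * N0 \<le> N - K" using N(1) by linarith
      then have "(m * N0) div m \<le> (N - K) div m" by (rule div_le_mono)
      then show ?thesis unfolding n_def using m0 by simp
    qed
    have L1: "N \<ge> 2 * K + 1" and L2: "N \<ge> n * m + K" using N(1) d1 by linarith+
    have two: "N \<le> 2 * (n * m)" using N(1) d2 by linarith
    have ge: "mn N \<le> mY n" by (rule mY_ge[OF L1 L2])
    have Npos: "real N > 0" using N(1) by simp
    have mnpos: "mn N > 0"
    proof (rule ccontr)
      assume "\<not> mn N > 0"
      then have "real N * mn N \<le> 0" using Npos by (simp add: mult_nonneg_nonpos)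
      then show False using N(2) cpos by linarith
    qed
    have "real N * mn N \<le> (2 * real m) * (real n * mn N)"
    proof -
      have "real N \<le> 2 * (real n * real m)" using two by (metis of_nat_le_iff of_nat_mult of_nat_numeral)
      then have "real N * mn N \<le> (2 * (real n * real m)) * mn N" using mnpos by (intro mult_right_mono) auto
      then show ?thesis by (simp add: algebra_simps)
    qed
    then have "c < (2 * real m) * (real n * mn N)" using N(2) by linarith
    then have "c / (2 * real m) < real n * mn N" using m0 by (simp add: divide_less_eq mult.commute)
    also have "\<dots> \<le> real n * mY n" using ge by (intro mult_left_mono) auto
    finally show ?thesis using nN0 by (intro exI[of _ n]) auto
  qed
  have "ereal (c / (2 * real m)) \<le> limsup g"
    unfolding limsup_INF_SUP
  proof (rule INF_greatest)
    fix N0 :: nat assume "N0 \<in> UNIV"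
    obtain n where n: "n \<ge> N0" "c / (2 * real m) \<le> real n * mY n" using key by blast
    show "ereal (c / (2 * real m)) \<le> (SUP n\<in>{N0..}. g n)"
      using n by (intro SUP_upper2[of n]) (auto simp: g_def)
  qed
  moreover have "0 < ereal (c / (2 * real m))" using cpos m1 by simp
  ultimately have "limsup g > 0" by (rule order.strict_trans2[rotated])
  then show ?thesis
    unfolding boshernitzan_def using mu_invariant unfolding g_def mY_def by blast
qed

end

theorem lemma3p11:
  fixes A :: "'b set" and X Xj :: "(int \<Rightarrow> 'b) set" and m :: nat
  assumes "minimal_subshift A X"
    and "boshernitzan A X"
    and "m \<ge> 1"
    and "minimal_component A (shift ^^ m) X Xj"
  shows "boshernitzan (lang m X) (block_code m ` Xj)"
proof -
  obtain \<nu> where nu: "invariant_prob A X \<nu>"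
    and lim: "limsup (\<lambda>n::nat. ereal (real n * Min {measure \<nu> (cylinder u \<inter> X) | u. u \<in> lang n X})) > 0"
    using assms(2) unfolding boshernitzan_def by blast
  have sub: "finite A" "closedin (full_shift_top A) X" "shift ` X = X"
    and minX: "\<And>W. W \<subseteq> X \<Longrightarrow> W \<noteq> {} \<Longrightarrow> closed_invariant A shift W \<Longrightarrow> W = X"
    using assms(1) unfolding minimal_subshift_def subshift_def closed_invariant_def minimal_component_def
    by blast+
  have mc: "Xj \<subseteq> X" "Xj \<noteq> {}" "closedin (full_shift_top A) Xj" "(shift ^^ m) ` Xj = Xj"
    and minXj: "\<And>W. W \<subseteq> Xj \<Longrightarrow> W \<noteq> {} \<Longrightarrow> closed_invariant A (shift ^^ m) W \<Longrightarrow> W = Xj"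
    using assms(4) unfolding minimal_component_def closed_invariant_def by blast+
  interpret B: bsetup A X Xj m \<nu>
  proof
    show "finite A" "closedin (full_shift_top A) X" using sub by auto
    show "inv_set 1 X" using sub(3) by (intro inv_of_image) (simp add: shift_eq)
    show "\<And>W. W \<subseteq> X \<Longrightarrow> W \<noteq> {} \<Longrightarrow> closed_invariant A shift W \<Longrightarrow> W = X" by (rule minX)
    show "1 \<le> m" by (fact assms(3))
    show "Xj \<subseteq> X" "Xj \<noteq> {}" "closedin (full_shift_top A) Xj" using mc by auto
    show "inv_set (int m) Xj" using mc(4) by (intro inv_of_image) (simp add: funpow_shift)
    show "\<And>W. W \<subseteq> Xj \<Longrightarrow> W \<noteq> {} \<Longrightarrow> closed_invariant A (shift ^^ m) W \<Longrightarrow> W = Xj" by (rule minXj)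
    show "invariant_prob A X \<nu>" by (fact nu)
  qed
  have "boshernitzan B.Lb B.Yb" by (rule B.final) (use lim in \<open>simp add: B.mn_def\<close>)
  then show ?thesis unfolding B.Lb_def B.Yb_def .
qed


end
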